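(* Let $X,Y$ be real Hilbert spaces and $I$ either $[0,T]$ ($T>0$) or $[0,+\infty)$. Assume: $K\subset X$ is a nonempty closed convex cone; $A:X\to X$ satisfies $(Au-Av,u-v)_X\ge m_A\|u-v\|_X^2$ and $\|Au-Av\|_X\le L_A\|u-v\|_X$ for all $u,v\in X$, with $m_A,L_A>0$; $j:Y\times K\to\mathbb{R}$ is such that $j(\eta,\cdot)$ is convex, positively homogeneous and Lipschitz continuous on $K$ for every $\eta\in Y$, and there is $\alpha_j\ge0$ with $j(\eta_1,v_2)-j(\eta_1,v_1)+j(\eta_2,v_1)-j(\eta_2,v_2)\le\alpha_j\|\eta_1-\eta_2\|_Y\|v_1-v_2\|_X$ for all $\eta_i\in Y$, $v_i\in K$; $f\in C(I;X)$; $B:X\to X$ is Lipschitz continuous; $u_0\in X$; and $\mathcal{R}:C(I;X)\to C(I;Y)$, $\mathcal{S}:C(I;X)\to C(I;X)$ are history-dependent operators. Then there exists a unique function $u:I\to X$ with $u\in C^1(I;X)$ and $\dot u\in C(I;K)$ such that $$-\dot u(t)\in \mathrm{N}_{C(\mathcal{R}\dot u(t),t)}\big(A\dot u(t)+Bu(t)+\mathcal{S}\dot u(t)\big)\quad\forall\,t\in I,\qquad u(0)=u_0.$$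
   Context: An operator $\mathcal{P}:C(I;Z_1)\to C(I;Z_2)$ is history-dependent if for every compact $\mathcal J\subset I$ there is $L_{\mathcal J}>0$ with $\|\mathcal{P}u_1(t)-\mathcal{P}u_2(t)\|_{Z_2}\le L_{\mathcal J}\int_0^t\|u_1(s)-u_2(s)\|_{Z_1}ds$ for all $u_1,u_2\in C(I;Z_1)$, $t\in\mathcal J$. Define $J(\eta,v)=j(\eta,v)$ for $v\in K$, $J(\eta,v)=+\infty$ for $v\notin K$; $C(\eta)=\{\xi\in X: J(\eta,v)\ge(\xi,v)_X\ \forall v\in X\}$; $C(\eta,t)=f(t)-C(\eta)$. For a nonempty closed convex $D\subset X$, $\mathrm{N}_D(x)=\{\xi:(\xi,w-x)_X\le0\ \forall w\in D\}$ if $x\in D$, $\emptyset$ otherwise. *)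

theory Defs
  imports "HOL-Analysis.Analysis"
begin

text \<open>History-dependent operator P from C(I;Z1) to C(I;Z2) (functions are total on real;
  only their values on I matter).\<close>
definition history_dependent :: "real set \<Rightarrow> ((real \<Rightarrow> 'a::real_normed_vector) \<Rightarrow> (real \<Rightarrow> 'b::real_normed_vector)) \<Rightarrow> bool" where
  "history_dependent I P \<longleftrightarrow>
     (\<forall>u. continuous_on I u \<longrightarrow> continuous_on I (P u)) \<and>
     (\<forall>J. compact J \<and> J \<subseteq> I \<longrightarrow>
        (\<exists>L>0. \<forall>u1 u2. continuous_on I u1 \<and> continuous_on I u2 \<longrightarrow>
           (\<forall>t\<in>J. norm (P u1 t - P u2 t) \<le> L * integral {0..t} (\<lambda>s. norm (u1 s - u2 s)))))"

definition Jfun :: "'x set \<Rightarrow> ('y \<Rightarrow> 'x \<Rightarrow> real) \<Rightarrow> 'y \<Rightarrow> 'x \<Rightarrow> ereal" where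
  "Jfun K j \<eta> v = (if v \<in> K then ereal (j \<eta> v) else \<infinity>)"

definition Cset :: "'x::real_inner set \<Rightarrow> ('y \<Rightarrow> 'x \<Rightarrow> real) \<Rightarrow> 'y \<Rightarrow> 'x set" where
  "Cset K j \<eta> = {\<xi>. \<forall>v. Jfun K j \<eta> v \<ge> ereal (inner \<xi> v)}"

definition Cset_t :: "'x::real_inner set \<Rightarrow> ('y \<Rightarrow> 'x \<Rightarrow> real) \<Rightarrow> (real \<Rightarrow> 'x) \<Rightarrow> 'y \<Rightarrow> real \<Rightarrow> 'x set" where
  "Cset_t K j f \<eta> t = {f t - \<xi> | \<xi>. \<xi> \<in> Cset K j \<eta>}"

definition normal_cone :: "'x::real_inner set \<Rightarrow> 'x \<Rightarrow> 'x set" where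
  "normal_cone D x = (if x \<in> D then {\<xi>. \<forall>w\<in>D. inner \<xi> (w - x) \<le> 0} else {})"

end

theory Submission
  imports Defs
begin


lemma small_pos_limit:
  fixes Q c :: real
  assumes "c \<ge> 0" "\<And>s. 0 < s \<Longrightarrow> s \<le> 1 \<Longrightarrow> 0 \<le> Q + s * c"
  shows "0 \<le> Q"
proof (rule ccontr)
  assume "\<not> 0 \<le> Q"
  define s where "s = min 1 (- Q / (2 * (c + 1)))"
  have "- Q / (2 * (c + 1)) > 0" using \<open>\<not> 0 \<le> Q\<close> assms(1) by (intro divide_pos_pos) auto
  hence s0: "0 < s" "s \<le> 1" by (auto simp: s_def)
  have "s * c \<le> (- Q / (2 * (c + 1))) * c" using assms(1) by (intro mult_right_mono) (auto simp: s_def)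
  also have "\<dots> \<le> - Q / 2"
  proof -
    have "(- Q / (2 * (c + 1))) * c = (-Q/2) * (c / (c+1))" using assms(1) by (simp add: field_simps)
    also have "\<dots> \<le> (-Q/2) * 1" using \<open>\<not> 0 \<le> Q\<close> assms(1) by (intro mult_left_mono) auto
    finally show ?thesis by simp
  qed
  finally have "Q + s * c < 0" using \<open>\<not> 0 \<le> Q\<close> by linarith
  with assms(2)[OF s0] show False by linarith
qed

lemma midpoint_norm:
  fixes x y z :: "'x::real_inner"
  shows "(norm ((1/2) *\<^sub>R x + (1/2) *\<^sub>R y - z))\<^sup>2 = (norm (x - z))\<^sup>2 / 2 + (norm (y - z))\<^sup>2 / 2 - (norm (x - y))\<^sup>2 / 4"
proof -
  have e: "(1/2) *\<^sub>R x + (1/2) *\<^sub>R y - z = (1/2) *\<^sub>R ((x - z) + (y - z))" by (simp add: algebra_simps flip: scaleR_add_left)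
  have e2: "x - y = (x - z) - (y - z)" by simp
  show ?thesis unfolding e e2
    by (simp add: power2_norm_eq_inner inner_add_left inner_add_right inner_diff_left inner_diff_right inner_commute field_simps)
qed

lemma convex_step_norm:
  fixes p v z :: "'x::real_inner"
  shows "(norm ((1 - s) *\<^sub>R p + s *\<^sub>R v - z))\<^sup>2 = (norm (p - z))\<^sup>2 + 2 * s * inner (p - z) (v - p) + s\<^sup>2 * (norm (v - p))\<^sup>2"
proof -
  have e: "(1 - s) *\<^sub>R p + s *\<^sub>R v - z = (p - z) + s *\<^sub>R (v - p)" by (simp add: algebra_simps)
  show ?thesis unfolding e power2_norm_eq_inner
    by (simp add: inner_add_left inner_add_right inner_diff_left inner_diff_right inner_commute power2_eq_square algebra_simps)
qed

lemma prox_exists: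
  fixes K :: "'x::{real_inner,complete_space} set" and \<phi> :: "'x \<Rightarrow> real"
  assumes K: "K \<noteq> {}" "closed K" "convex K" and cv: "convex_on K \<phi>" and lip: "L-lipschitz_on K \<phi>"
  shows "\<exists>p\<in>K. \<forall>v\<in>K. inner (p - z) (v - p) + \<phi> v - \<phi> p \<ge> 0"
proof -
  define F where "F v = \<phi> v + (norm (v - z))\<^sup>2 / 2" for v
  obtain k0 where k0: "k0 \<in> K" using K by auto
  have L0: "L \<ge> 0" using lip by (rule lipschitz_on_nonneg)
  have Fbd: "F v \<ge> \<phi> k0 - L * norm (z - k0) - L\<^sup>2/2" if "v \<in> K" for v
  proof -
    have "\<bar>\<phi> v - \<phi> k0\<bar> \<le> L * norm (v - k0)" using lipschitz_onD[OF lip that k0] by (simp add: dist_norm dist_real_def)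
    hence a: "\<phi> v \<ge> \<phi> k0 - L * norm (v - k0)" by linarith
    have "norm (v - k0) \<le> norm (v - z) + norm (z - k0)" using norm_triangle_ineq[of "v - z" "z - k0"] by simp
    hence b: "L * norm (v - k0) \<le> L * norm (v - z) + L * norm (z - k0)" using L0 by (metis distrib_left mult_left_mono)
    have c: "(norm (v - z))\<^sup>2 / 2 - L * norm (v - z) \<ge> - L\<^sup>2/2"
      using sum_power2_ge_zero[of "norm (v - z) - L" 0] by (simp add: power2_eq_square algebra_simps)
    show ?thesis unfolding F_def using a b c by linarith
  qed
  define m where "m = Inf (F ` K)"
  have bdd: "bdd_below (F ` K)" using Fbd by (auto intro!: bdd_belowI2)
  have mle: "m \<le> F v" if "v \<in> K" for v unfolding m_def using bdd that by (auto intro: cInf_lower)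
  have "\<exists>a\<in>K. F a < m + inverse (real (Suc n))" for n
  proof -
    have "Inf (F ` K) < m + inverse (real (Suc n))" unfolding m_def by simp
    from cInf_lessD[OF _ this] K show ?thesis by auto
  qed
  then obtain a where a: "\<And>n. a n \<in> K" "\<And>n. F (a n) < m + inverse (real (Suc n))" by metis
  have mid: "(norm (x - y))\<^sup>2 / 8 \<le> (F x + F y)/2 - m" if "x \<in> K" "y \<in> K" for x y
  proof -
    let ?c = "(1/2) *\<^sub>R x + (1/2) *\<^sub>R y"
    have cK: "?c \<in> K" using K(3) that by (intro convexD) auto
    have "\<phi> ((1 - 1/2) *\<^sub>R x + (1/2) *\<^sub>R y) \<le> (1 - 1/2) * \<phi> x + (1/2) * \<phi> y"
      using convex_onD[OF cv, of "1/2" x y] that by auto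
    hence "\<phi> ?c \<le> \<phi> x / 2 + \<phi> y / 2" by simp
    moreover have "m \<le> F ?c" using mle cK by auto
    ultimately show ?thesis unfolding F_def midpoint_norm by (simp add: field_simps)
  qed
  have Cau: "Cauchy a"
  proof (rule metric_CauchyI)
    fix e :: real assume e: "0 < e"
    obtain N :: nat where N: "8 / e\<^sup>2 < real N" using reals_Archimedean2 by blast
    have "\<forall>n\<ge>N. \<forall>k\<ge>N. dist (a n) (a k) < e"
    proof (intro allI impI)
      fix n k assume nk: "n \<ge> N" "k \<ge> N"
      have i1: "inverse (real (Suc n)) \<le> inverse (real (Suc N))" using nk by (simp add: field_simps)
      have i2: "inverse (real (Suc k)) \<le> inverse (real (Suc N))" using nk by (simp add: field_simps)
      have "(norm (a n - a k))\<^sup>2 \<le> 8 * ((F (a n) + F (a k))/2 - m)" using mid[OF a(1)[of n] a(1)[of k]] by (simp add: algebra_simps)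
      also have "\<dots> < 8 * inverse (real (Suc N))" using a(2)[of n] a(2)[of k] i1 i2 by argo
      also have "\<dots> < e\<^sup>2"
      proof -
        have "8 / e\<^sup>2 < real (Suc N)" using N by simp
        thus ?thesis using e by (simp add: field_simps)
      qed
      finally have "(norm (a n - a k))\<^sup>2 < e\<^sup>2" .
      hence "norm (a n - a k) < e" using e by (simp add: power_less_imp_less_base)
      thus "dist (a n) (a k) < e" by (simp add: dist_norm)
    qed
    thus "\<exists>M. \<forall>n\<ge>M. \<forall>k\<ge>M. dist (a n) (a k) < e" by blast
  qed
  then obtain p where p: "a \<longlonglongrightarrow> p" using Cauchy_convergent_iff convergent_def by blast
  have pK: "p \<in> K" using closed_sequentially[OF K(2) a(1) p] .
  have Fc: "continuous_on K F" unfolding F_def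
    by (intro continuous_intros lipschitz_on_continuous_on[OF lip]) auto
  have "(\<lambda>n. F (a n)) \<longlonglongrightarrow> F p"
    by (rule continuous_on_tendsto_compose[OF Fc p pK]) (simp add: a(1))
  moreover have "(\<lambda>n. m + inverse (real (Suc n))) \<longlonglongrightarrow> m"
    using tendsto_add[OF tendsto_const LIMSEQ_inverse_real_of_nat, of m] by simp
  ultimately have "F p \<le> m" by (rule LIMSEQ_le) (use a(2) less_imp_le in blast)
  hence pmin: "F p \<le> F v" if "v \<in> K" for v using mle[OF that] by linarith
  show ?thesis
  proof (intro bexI[OF _ pK] ballI)
    fix v assume v: "v \<in> K"
    let ?Q = "inner (p - z) (v - p) + \<phi> v - \<phi> p"
    have "0 \<le> ?Q + s * ((norm (v - p))\<^sup>2 / 2)" if s: "0 < s" "s \<le> 1" for s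
    proof -
      have vs: "(1 - s) *\<^sub>R p + s *\<^sub>R v \<in> K" using K(3) pK v s by (intro convexD) auto
      have cvx: "\<phi> ((1 - s) *\<^sub>R p + s *\<^sub>R v) \<le> (1 - s) * \<phi> p + s * \<phi> v"
        using convex_onD[OF cv, of s p v] s pK v by auto
      have "F p \<le> F ((1 - s) *\<^sub>R p + s *\<^sub>R v)" using pmin vs by auto
      moreover have "\<phi> ((1 - s) *\<^sub>R p + s *\<^sub>R v) \<le> \<phi> p - s * \<phi> p + s * \<phi> v"
        using cvx by (simp add: algebra_simps)
      ultimately have "0 \<le> s * \<phi> v - s * \<phi> p + s * inner (p - z) (v - p) + s\<^sup>2 * (norm (v - p))\<^sup>2 / 2"
        unfolding F_def convex_step_norm mult.assoc[of 2 s] by argo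
      hence "0 \<le> s * (?Q + s * ((norm (v - p))\<^sup>2 / 2))" by (simp add: algebra_simps power2_eq_square)
      thus ?thesis using s by (simp add: zero_le_mult_iff)
    qed
    from small_pos_limit[OF _ this] show "?Q \<ge> 0" by simp
  qed
qed

lemma vi_exists:
  fixes K :: "'x::{real_inner,complete_space} set" and \<phi> :: "'x \<Rightarrow> real" and A :: "'x \<Rightarrow> 'x"
  assumes K: "K \<noteq> {}" "closed K" "convex K" and cv: "convex_on K \<phi>" and lip: "L-lipschitz_on K \<phi>"
    and A: "mA > 0" "LA > 0"
      "\<And>u v. inner (A u - A v) (u - v) \<ge> mA * (norm (u - v))\<^sup>2"
      "\<And>u v. norm (A u - A v) \<le> LA * norm (u - v)"
  shows "\<exists>w\<in>K. \<forall>v\<in>K. inner (A w - g) (v - w) + \<phi> v - \<phi> w \<ge> 0"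
proof -
  define \<rho> where "\<rho> = mA / LA\<^sup>2"
  have \<rho>: "\<rho> > 0" using A by (simp add: \<rho>_def)
  have L0: "L \<ge> 0" using lip by (rule lipschitz_on_nonneg)
  define P where "P z = (SOME p. p \<in> K \<and> (\<forall>v\<in>K. inner (p - z) (v - p) + \<rho> * \<phi> v - \<rho> * \<phi> p \<ge> 0))" for z
  have P: "P z \<in> K \<and> (\<forall>v\<in>K. inner (P z - z) (v - P z) + \<rho> * \<phi> v - \<rho> * \<phi> (P z) \<ge> 0)" for z
  proof -
    have "\<exists>p\<in>K. \<forall>v\<in>K. inner (p - z) (v - p) + \<rho> * \<phi> v - \<rho> * \<phi> p \<ge> 0"
    proof -
      have c1: "convex_on K (\<lambda>v. \<rho> * \<phi> v)" using \<rho> cv by (intro convex_on_cmul) auto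
      have c2: "(\<rho> * L)-lipschitz_on K (\<lambda>v. \<rho> * \<phi> v)" using \<rho> lip by (intro lipschitz_on_cmult_real_nonneg) auto
      show ?thesis using prox_exists[OF K c1 c2, of z] by (simp add: algebra_simps)
    qed
    then have "\<exists>p. p \<in> K \<and> (\<forall>v\<in>K. inner (p - z) (v - p) + \<rho> * \<phi> v - \<rho> * \<phi> p \<ge> 0)" by blast
    from someI_ex[OF this] show ?thesis unfolding P_def .
  qed
  have Pne: "norm (P z1 - P z2) \<le> norm (z1 - z2)" for z1 z2
  proof -
    have h1: "inner (P z1 - z1) (P z2 - P z1) + \<rho> * \<phi> (P z2) - \<rho> * \<phi> (P z1) \<ge> 0" using bspec[OF P[of z1, THEN conjunct2] P[of z2, THEN conjunct1]] .
    have h2: "inner (P z2 - z2) (P z1 - P z2) + \<rho> * \<phi> (P z1) - \<rho> * \<phi> (P z2) \<ge> 0" using bspec[OF P[of z2, THEN conjunct2] P[of z1, THEN conjunct1]] .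
    have "inner (P z1 - z1) (P z2 - P z1) + inner (P z2 - z2) (P z1 - P z2) \<ge> 0" using h1 h2 by linarith
    hence "inner (P z1 - P z2) (P z1 - P z2) \<le> inner (z1 - z2) (P z1 - P z2)"
      by (simp add: inner_diff_left inner_diff_right inner_commute algebra_simps)
    also have "\<dots> \<le> norm (z1 - z2) * norm (P z1 - P z2)" by (rule norm_cauchy_schwarz)
    finally have "(norm (P z1 - P z2))\<^sup>2 \<le> norm (z1 - z2) * norm (P z1 - P z2)" by (simp add: power2_norm_eq_inner)
    thus ?thesis by (cases "norm (P z1 - P z2) = 0") (auto simp: power2_eq_square)
  qed
  define Tm where "Tm w = P (w - \<rho> *\<^sub>R (A w - g))" for w
  define c where "c = sqrt (max 0 (1 - \<rho> * mA))"
  have rA: "\<rho> * LA\<^sup>2 = mA" using A by (simp add: \<rho>_def)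
  have "\<rho> * mA > 0" using \<rho> A by simp
  hence "max 0 (1 - \<rho> * mA) < 1" by simp
  hence c: "0 \<le> c" "c < 1" unfolding c_def by (simp_all only: real_sqrt_ge_zero max.cobounded1 real_sqrt_lt_1_iff)
  have contr: "dist (Tm x) (Tm y) \<le> c * dist x y" for x y
  proof -
    define d where "d = x - y"
    define a where "a = A x - A y"
    have zd: "(x - \<rho> *\<^sub>R (A x - g)) - (y - \<rho> *\<^sub>R (A y - g)) = d - \<rho> *\<^sub>R a" by (simp add: d_def a_def algebra_simps)
    have ad: "inner a d \<ge> mA * (norm d)\<^sup>2" using A(3)[of x y] by (simp add: a_def d_def)
    have "norm a \<le> LA * norm d" using A(4)[of x y] by (simp add: a_def d_def)
    hence ad2: "(norm a)\<^sup>2 \<le> LA\<^sup>2 * (norm d)\<^sup>2" using norm_ge_zero[of a] by (simp add: power_mult_distrib[symmetric] power_mono)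
    have "(norm (d - \<rho> *\<^sub>R a))\<^sup>2 = (norm d)\<^sup>2 - 2 * \<rho> * inner a d + \<rho>\<^sup>2 * (norm a)\<^sup>2"
      unfolding power2_norm_eq_inner by (simp add: inner_diff_left inner_diff_right inner_commute power2_eq_square algebra_simps)
    also have "\<dots> \<le> (norm d)\<^sup>2 - 2 * \<rho> * (mA * (norm d)\<^sup>2) + \<rho>\<^sup>2 * (LA\<^sup>2 * (norm d)\<^sup>2)"
    proof -
      have "2 * \<rho> * (mA * (norm d)\<^sup>2) \<le> 2 * \<rho> * inner a d" using ad \<rho> by simp
      moreover have "\<rho>\<^sup>2 * (norm a)\<^sup>2 \<le> \<rho>\<^sup>2 * (LA\<^sup>2 * (norm d)\<^sup>2)" using ad2 by (simp add: mult_left_mono)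
      ultimately show ?thesis by linarith
    qed
    also have "\<dots> = (1 - \<rho> * mA) * (norm d)\<^sup>2"
    proof -
      have "\<rho>\<^sup>2 * (LA\<^sup>2 * (norm d)\<^sup>2) = \<rho> * (\<rho> * LA\<^sup>2) * (norm d)\<^sup>2" by algebra
      hence "\<rho>\<^sup>2 * (LA\<^sup>2 * (norm d)\<^sup>2) = \<rho> * mA * (norm d)\<^sup>2" unfolding rA .
      thus ?thesis by (simp add: algebra_simps)
    qed
    also have "\<dots> \<le> c\<^sup>2 * (norm d)\<^sup>2"
    proof -
      have "c\<^sup>2 = max 0 (1 - \<rho> * mA)" unfolding c_def by (rule real_sqrt_pow2) simp
      thus ?thesis by (intro mult_right_mono) auto
    qed
    finally have "(norm (d - \<rho> *\<^sub>R a))\<^sup>2 \<le> (c * norm d)\<^sup>2" by (simp add: power_mult_distrib)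
    hence "norm (d - \<rho> *\<^sub>R a) \<le> c * norm d" by (rule power2_le_imp_le[OF _ mult_nonneg_nonneg[OF c(1) norm_ge_zero]])
    moreover have "norm (Tm x - Tm y) \<le> norm (d - \<rho> *\<^sub>R a)" unfolding Tm_def using Pne[of "x - \<rho> *\<^sub>R (A x - g)" "y - \<rho> *\<^sub>R (A y - g)"] unfolding zd .
    ultimately show ?thesis unfolding dist_norm d_def by linarith
  qed
  have "\<exists>!w\<in>K. Tm w = w"
  proof (rule Banach_fix[OF _ K(1) c])
    show "complete K" using K(2) complete_eq_closed by blast
    show "Tm ` K \<subseteq> K" using P unfolding Tm_def by blast
    show "dist (Tm x) (Tm y) \<le> c * dist x y" for x y by (rule contr)
  qed
  then obtain w where w: "w \<in> K" "Tm w = w" by auto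
  show ?thesis
  proof (intro bexI[OF _ w(1)] ballI)
    fix v assume v: "v \<in> K"
    have "inner (w - (w - \<rho> *\<^sub>R (A w - g))) (v - w) + \<rho> * \<phi> v - \<rho> * \<phi> w \<ge> 0"
    proof -
      have ww: "P (w - \<rho> *\<^sub>R (A w - g)) = w" using w(2) unfolding Tm_def .
      have "\<forall>v\<in>K. inner (P (w - \<rho> *\<^sub>R (A w - g)) - (w - \<rho> *\<^sub>R (A w - g))) (v - P (w - \<rho> *\<^sub>R (A w - g))) + \<rho> * \<phi> v - \<rho> * \<phi> (P (w - \<rho> *\<^sub>R (A w - g))) \<ge> 0"
        using P[of "w - \<rho> *\<^sub>R (A w - g)"] by blast
      hence "\<forall>v\<in>K. inner (w - (w - \<rho> *\<^sub>R (A w - g))) (v - w) + \<rho> * \<phi> v - \<rho> * \<phi> w \<ge> 0"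
        unfolding ww .
      thus ?thesis using v by blast
    qed
    hence "\<rho> * (inner (A w - g) (v - w) + \<phi> v - \<phi> w) \<ge> 0" by (simp add: algebra_simps)
    thus "inner (A w - g) (v - w) + \<phi> v - \<phi> w \<ge> 0" using \<rho> by (simp add: zero_le_mult_iff)
  qed
qed

lemma vi_stable:
  fixes A :: "'x::real_inner \<Rightarrow> 'x"
  assumes A: "mA > 0" "\<And>u v. inner (A u - A v) (u - v) \<ge> mA * (norm (u - v))\<^sup>2"
    and w1: "0 \<le> inner (A w1 - g1) (w2 - w1) + \<phi>1 w2 - \<phi>1 w1"
    and w2: "0 \<le> inner (A w2 - g2) (w1 - w2) + \<phi>2 w1 - \<phi>2 w2"
    and E: "\<phi>1 w2 - \<phi>1 w1 + \<phi>2 w1 - \<phi>2 w2 \<le> E * norm (w1 - w2)" "E \<ge> 0"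
  shows "mA * norm (w1 - w2) \<le> norm (g1 - g2) + E"
proof -
  have "inner (A w1 - A w2) (w1 - w2) \<le> inner (g1 - g2) (w1 - w2) + (\<phi>1 w2 - \<phi>1 w1 + \<phi>2 w1 - \<phi>2 w2)"
    using w1 w2 by (simp add: inner_diff_left inner_diff_right inner_commute algebra_simps)
  also have "\<dots> \<le> norm (g1 - g2) * norm (w1 - w2) + E * norm (w1 - w2)"
    using E(1) Cauchy_Schwarz_ineq2[of "g1 - g2" "w1 - w2"] by linarith
  finally have "mA * (norm (w1 - w2))\<^sup>2 \<le> (norm (g1 - g2) + E) * norm (w1 - w2)"
    using A(2)[of w1 w2] by (simp add: algebra_simps)
  hence "(mA * norm (w1 - w2)) * norm (w1 - w2) \<le> (norm (g1 - g2) + E) * norm (w1 - w2)"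
    by (simp add: power2_eq_square mult.assoc)
  thus ?thesis by (cases "norm (w1 - w2) = 0") (use A(1) E(2) in \<open>auto simp: mult_le_cancel_right\<close>)
qed




typedef ('a::"{real_inner,complete_space}") hw = "UNIV :: 'a set" morphisms rp ab by auto

declare ab_inverse[simplified, simp] rp_inverse[simp]

lemma rp_inject': "rp x = rp y \<longleftrightarrow> x = y" by (rule rp_inject)

instantiation hw :: ("{real_inner,complete_space}") real_vector
begin
definition zero_hw_def: "0 = ab 0"
definition plus_hw_def: "x + y = ab (rp x + rp y)"
definition minus_hw_def: "x - y = ab (rp x - rp y)"
definition uminus_hw_def: "- x = ab (- rp x)"
definition scaleR_hw_def: "scaleR c x = ab (scaleR c (rp x))"
instance
  by standard (simp_all add: zero_hw_def plus_hw_def minus_hw_def uminus_hw_def scaleR_hw_def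
      algebra_simps flip: rp_inject')
end

lemma rp_0[simp]: "rp 0 = 0" and rp_add[simp]: "rp (x + y) = rp x + rp y"
  and rp_diff[simp]: "rp (x - y) = rp x - rp y" and rp_minus[simp]: "rp (- x) = - rp x"
  and rp_scaleR[simp]: "rp (c *\<^sub>R x) = c *\<^sub>R rp x"
  by (simp_all add: zero_hw_def plus_hw_def minus_hw_def uminus_hw_def scaleR_hw_def)

instantiation hw :: ("{real_inner,complete_space}") real_normed_vector
begin
definition norm_hw_def: "norm x = norm (rp x)"
definition sgn_hw_def: "sgn (x :: 'a hw) = x /\<^sub>R norm x"
definition dist_hw_def: "dist (x :: 'a hw) y = norm (x - y)"
definition uniformity_hw_def: "(uniformity :: ('a hw \<times> 'a hw) filter) = (INF e\<in>{0 <..}. principal {(x, y). dist x y < e})"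
definition open_hw_def: "open (U :: 'a hw set) \<longleftrightarrow> (\<forall>x\<in>U. eventually (\<lambda>(x', y). x' = x \<longrightarrow> y \<in> U) uniformity)"
instance
proof
  fix x y :: "'a hw" and c :: real
  show "norm x = 0 \<longleftrightarrow> x = 0" by (simp add: norm_hw_def flip: rp_inject')
  show "norm (x + y) \<le> norm x + norm y" by (simp add: norm_hw_def norm_triangle_ineq)
  show "norm (c *\<^sub>R x) = \<bar>c\<bar> * norm x" by (simp add: norm_hw_def)
qed (simp_all add: sgn_hw_def dist_hw_def uniformity_hw_def open_hw_def)
end

lemma norm_rp[simp]: "norm (rp x) = norm x" by (simp add: norm_hw_def)
lemma norm_ab[simp]: "norm (ab y) = norm y" by (simp add: norm_hw_def)
lemma dist_rp: "dist (rp x) (rp y) = dist x y" by (simp only: dist_norm norm_hw_def rp_diff)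

instance hw :: ("{real_inner,complete_space}") complete_space
proof
  fix X :: "nat \<Rightarrow> 'a hw" assume "Cauchy X"
  hence "Cauchy (\<lambda>n. rp (X n))" unfolding Cauchy_def by (simp add: dist_rp)
  then obtain l where l: "(\<lambda>n. rp (X n)) \<longlonglongrightarrow> l" using Cauchy_convergent_iff convergent_def by blast
  have "X \<longlonglongrightarrow> ab l"
  proof -
    have e: "dist (X n) (ab l) = dist (rp (X n)) l" for n using dist_rp[of "X n" "ab l"] by simp
    show ?thesis using l unfolding lim_sequentially e .
  qed
  thus "convergent X" unfolding convergent_def by blast
qed

instance hw :: ("{real_inner,complete_space}") banach ..

lemma bl_rp: "bounded_linear rp"
  by (rule bounded_linear_intro[where K=1]) simp_all
lemma bl_ab: "bounded_linear ab"
  by (rule bounded_linear_intro[where K=1]) (simp_all flip: rp_inject')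


lemma ab_diff: "ab (x - y) = ab x - ab y" by (simp flip: rp_inject')

definition intx :: "real set \<Rightarrow> (real \<Rightarrow> 'a::{real_inner,complete_space}) \<Rightarrow> 'a" where
  "intx S w = rp (integral S (\<lambda>s. ab (w s)))"

lemma cont_ab: "continuous_on S w \<Longrightarrow> continuous_on S (\<lambda>s. ab (w s))"
  by (rule bounded_linear.continuous_on[OF bl_ab])

lemma intx_deriv:
  assumes "continuous_on {a..b} w" "x \<in> {a..b}"
  shows "((\<lambda>u. intx {a..u} w) has_vector_derivative w x) (at x within {a..b})"
proof -
  have "((\<lambda>u. integral {a..u} (\<lambda>s. ab (w s))) has_vector_derivative ab (w x)) (at x within {a..b})"
    by (rule integral_has_vector_derivative[OF cont_ab[OF assms(1)] assms(2)])
  from bounded_linear.has_vector_derivative[OF bl_rp this] show ?thesis unfolding intx_def by simp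
qed

lemma intx_ftc:
  assumes "a \<le> b" "\<And>x. x \<in> {a..b} \<Longrightarrow> (v has_vector_derivative v' x) (at x within {a..b})"
  shows "intx {a..b} v' = v b - v a"
proof -
  have "((\<lambda>x. ab (v x)) has_vector_derivative ab (v' x)) (at x within {a..b})" if "x \<in> {a..b}" for x
    by (rule bounded_linear.has_vector_derivative[OF bl_ab assms(2)[OF that]])
  from fundamental_theorem_of_calculus[OF assms(1) this]
  have "integral {a..b} (\<lambda>x. ab (v' x)) = ab (v b) - ab (v a)" by (rule integral_unique)
  thus ?thesis unfolding intx_def by simp
qed

lemma intx_diff:
  assumes "continuous_on {a..b} w1" "continuous_on {a..b} w2"
  shows "intx {a..b} w1 - intx {a..b} w2 = intx {a..b} (\<lambda>s. w1 s - w2 s)"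
proof -
  have i1: "(\<lambda>s. ab (w1 s)) integrable_on {a..b}" by (rule integrable_continuous_interval[OF cont_ab[OF assms(1)]])
  have i2: "(\<lambda>s. ab (w2 s)) integrable_on {a..b}" by (rule integrable_continuous_interval[OF cont_ab[OF assms(2)]])
  show ?thesis unfolding intx_def ab_diff using integral_diff[OF i1 i2] by (simp flip: rp_diff)
qed

lemma intx_norm:
  assumes "continuous_on {a..b} w"
  shows "norm (intx {a..b} w) \<le> integral {a..b} (\<lambda>s. norm (w s))"
proof -
  have i1: "(\<lambda>s. ab (w s)) integrable_on {a..b}" by (rule integrable_continuous_interval[OF cont_ab[OF assms(1)]])
  have i2: "(\<lambda>s. norm (w s)) integrable_on {a..b}"
    by (rule integrable_continuous_interval) (intro continuous_intros assms)
  show ?thesis unfolding intx_def norm_rp by (rule integral_norm_bound_integral[OF i1 i2]) simp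
qed

lemma intx_cong: "(\<And>s. s \<in> S \<Longrightarrow> w1 s = w2 s) \<Longrightarrow> intx S w1 = intx S w2"
  unfolding intx_def by (metis (mono_tags, lifting) integral_cong)

lemma intx_singleton: "intx {a} w = 0"
  unfolding intx_def by simp

lemma intx_refl: "intx {a..a} w = 0"
  unfolding intx_def by simp


locale static =
  fixes K :: "'x::{real_inner,complete_space} set"
    and A :: "'x \<Rightarrow> 'x" and mA LA :: real
    and j :: "'y::{real_inner,complete_space} \<Rightarrow> 'x \<Rightarrow> real" and \<alpha>j :: real
  assumes K: "K \<noteq> {}" "closed K" "convex K" "cone K"
    and A: "mA > 0" "LA > 0"
      "\<And>u v. inner (A u - A v) (u - v) \<ge> mA * (norm (u - v))\<^sup>2"
      "\<And>u v. norm (A u - A v) \<le> LA * norm (u - v)"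
    and j_convex: "\<And>\<eta>. convex_on K (j \<eta>)"
    and j_hom: "\<And>\<eta> c v. c > 0 \<Longrightarrow> v \<in> K \<Longrightarrow> j \<eta> (c *\<^sub>R v) = c * j \<eta> v"
    and j_lip: "\<And>\<eta>. \<exists>L. L-lipschitz_on K (j \<eta>)"
    and j_alpha: "\<alpha>j \<ge> 0"
      "\<And>\<eta>1 \<eta>2 v1 v2. v1 \<in> K \<Longrightarrow> v2 \<in> K \<Longrightarrow>
         j \<eta>1 v2 - j \<eta>1 v1 + j \<eta>2 v1 - j \<eta>2 v2 \<le> \<alpha>j * norm (\<eta>1 - \<eta>2) * norm (v1 - v2)"
begin

lemma zero_K: "0 \<in> K"
proof -
  obtain k where "k \<in> K" using K(1) by auto
  with K(4) have "0 *\<^sub>R k \<in> K" unfolding cone_def by blast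
  thus ?thesis by simp
qed

lemma scale_K: "v \<in> K \<Longrightarrow> c \<ge> 0 \<Longrightarrow> c *\<^sub>R v \<in> K"
  using K(4) unfolding cone_def by blast

lemma j_zero: "j \<eta> 0 = 0"
proof -
  have "j \<eta> ((2::real) *\<^sub>R 0) = 2 * j \<eta> 0" by (rule j_hom) (auto simp: zero_K)
  thus ?thesis by simp
qed

definition vi :: "'y \<Rightarrow> 'x \<Rightarrow> 'x \<Rightarrow> bool" where
  "vi \<eta> g w \<longleftrightarrow> w \<in> K \<and> (\<forall>v\<in>K. 0 \<le> inner (A w - g) (v - w) + j \<eta> v - j \<eta> w)"

definition Sol :: "'y \<Rightarrow> 'x \<Rightarrow> 'x" where
  "Sol \<eta> g = (SOME w. vi \<eta> g w)"

lemma Sol: "vi \<eta> g (Sol \<eta> g)"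
proof -
  obtain L where L: "L-lipschitz_on K (j \<eta>)" using j_lip by blast
  have "\<exists>w\<in>K. \<forall>v\<in>K. inner (A w - g) (v - w) + j \<eta> v - j \<eta> w \<ge> 0"
    by (rule vi_exists[OF K(1-3) j_convex L A])
  hence "\<exists>w. vi \<eta> g w" unfolding vi_def by blast
  from someI_ex[OF this] show ?thesis unfolding Sol_def .
qed

lemma Sol_K: "Sol \<eta> g \<in> K" using Sol unfolding vi_def by blast

lemma vi_lip:
  assumes "vi \<eta>1 g1 w1" "vi \<eta>2 g2 w2"
  shows "mA * norm (w1 - w2) \<le> norm (g1 - g2) + \<alpha>j * norm (\<eta>1 - \<eta>2)"
proof -
  have w: "w1 \<in> K" "w2 \<in> K" using assms unfolding vi_def by auto
  show ?thesis
  proof (rule vi_stable[OF A(1) A(3)])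
    show "0 \<le> inner (A w1 - g1) (w2 - w1) + j \<eta>1 w2 - j \<eta>1 w1" using assms(1) w unfolding vi_def by blast
    show "0 \<le> inner (A w2 - g2) (w1 - w2) + j \<eta>2 w1 - j \<eta>2 w2" using assms(2) w unfolding vi_def by blast
    show "j \<eta>1 w2 - j \<eta>1 w1 + j \<eta>2 w1 - j \<eta>2 w2 \<le> \<alpha>j * norm (\<eta>1 - \<eta>2) * norm (w1 - w2)"
      by (rule j_alpha(2)[OF w])
    show "0 \<le> \<alpha>j * norm (\<eta>1 - \<eta>2)" using j_alpha(1) by simp
  qed
qed

lemma Sol_lip: "mA * norm (Sol \<eta>1 g1 - Sol \<eta>2 g2) \<le> norm (g1 - g2) + \<alpha>j * norm (\<eta>1 - \<eta>2)"
  by (rule vi_lip[OF Sol Sol])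

lemma Sol_unique: assumes "vi \<eta> g w" shows "w = Sol \<eta> g"
proof -
  have "mA * norm (w - Sol \<eta> g) \<le> 0" using vi_lip[OF assms Sol, of \<eta> g] by simp
  thus ?thesis using A(1) by (simp add: mult_le_0_iff)
qed

lemma Sol_lip2: "dist (Sol (fst p) (snd p)) (Sol (fst q) (snd q)) \<le> ((1 + \<alpha>j) / mA) * dist p q"
proof -
  have "mA * dist (Sol (fst p) (snd p)) (Sol (fst q) (snd q)) \<le> dist (snd p) (snd q) + \<alpha>j * dist (fst p) (fst q)"
    using Sol_lip[of "fst p" "snd p" "fst q" "snd q"] by (simp add: dist_norm)
  also have "\<dots> \<le> dist p q + \<alpha>j * dist p q"
    using dist_fst_le[of p q] dist_snd_le[of p q] j_alpha(1) by (intro add_mono mult_left_mono) auto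
  finally have "mA * dist (Sol (fst p) (snd p)) (Sol (fst q) (snd q)) \<le> (1 + \<alpha>j) * dist p q" by (simp add: algebra_simps)
  thus ?thesis using A(1) by (simp add: field_simps)
qed

lemma Sol_cont:
  assumes "continuous_on X \<eta>" "continuous_on X g"
  shows "continuous_on X (\<lambda>t. Sol (\<eta> t) (g t))"
proof -
  have "((1 + \<alpha>j) / mA)-lipschitz_on UNIV (\<lambda>p. Sol (fst p) (snd p))"
    using Sol_lip2 j_alpha(1) A(1) by (intro lipschitz_onI) auto
  hence c: "continuous_on UNIV (\<lambda>p. Sol (fst p) (snd p))" by (rule lipschitz_on_continuous_on)
  have "continuous_on X (\<lambda>t. (\<eta> t, g t))" using assms by (intro continuous_intros)
  from continuous_on_compose2[OF c this] show ?thesis by simp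
qed

lemma eps_sub:
  assumes w: "w \<in> K" and e: "\<epsilon> > 0"
  shows "\<exists>\<xi>\<in>Cset K j \<eta>. inner \<xi> w \<ge> j \<eta> w - \<epsilon>"
proof -
  obtain L where L: "L-lipschitz_on K (j \<eta>)" using j_lip by blast
  have L0: "L \<ge> 0" using L by (rule lipschitz_on_nonneg)
  define lm where "lm = \<epsilon> / (L * L + 1)"
  have lam: "lm > 0" using e L0 by (simp add: lm_def add_nonneg_pos)
  have lamL: "lm * (L * L) \<le> \<epsilon>"
  proof -
    have "lm * (L * L) \<le> lm * (L * L + 1)" using lam by simp
    also have "\<dots> = \<epsilon>"
    proof -
      have "L * L + 1 > 0" by (simp add: add_nonneg_pos)
      thus ?thesis unfolding lm_def by simp
    qed
    finally show ?thesis .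
  qed
  have c1: "convex_on K (\<lambda>v. lm * j \<eta> v)" using lam j_convex by (intro convex_on_cmul) auto
  have c2: "(lm * L)-lipschitz_on K (\<lambda>v. lm * j \<eta> v)" using lam L by (intro lipschitz_on_cmult_real_nonneg) auto
  obtain p where pK: "p \<in> K" and pv: "\<And>v. v \<in> K \<Longrightarrow> inner (p - w) (v - p) + lm * j \<eta> v - lm * j \<eta> p \<ge> 0"
    using prox_exists[OF K(1-3) c1 c2, of w] by blast
  define g where "g = (1 / lm) *\<^sub>R (w - p)"
  have sub: "j \<eta> v \<ge> j \<eta> p + inner g (v - p)" if v: "v \<in> K" for v
  proof -
    have "lm * (j \<eta> v - j \<eta> p) \<ge> inner (w - p) (v - p)"
      using pv[OF v] by (simp add: inner_diff_left algebra_simps)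
    also have "inner (w - p) (v - p) = lm * inner g (v - p)" using lam by (simp add: g_def)
    finally have "lm * inner g (v - p) \<le> lm * (j \<eta> v - j \<eta> p)" .
    hence "inner g (v - p) \<le> j \<eta> v - j \<eta> p" using lam by simp
    thus ?thesis by simp
  qed
  have c1: "inner g v \<le> j \<eta> v" if v: "v \<in> K" for v
  proof (rule ccontr)
    assume "\<not> ?thesis"
    hence \<delta>: "inner g v - j \<eta> v > 0" by simp
    define s where "s = (\<bar>j \<eta> p - inner g p\<bar> + 1) / (inner g v - j \<eta> v)"
    have s: "s > 0" using \<delta> by (simp add: s_def)
    have "j \<eta> (s *\<^sub>R v) \<ge> j \<eta> p + inner g (s *\<^sub>R v - p)" by (rule sub[OF scale_K[OF v]]) (use s in simp)
    hence "s * j \<eta> v \<ge> j \<eta> p + s * inner g v - inner g p" using j_hom[OF s v] by (simp add: inner_diff_right)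
    hence "s * (inner g v - j \<eta> v) \<le> inner g p - j \<eta> p" by (simp add: algebra_simps)
    moreover have "s * (inner g v - j \<eta> v) = \<bar>j \<eta> p - inner g p\<bar> + 1" using \<delta> by (simp add: s_def)
    ultimately show False by linarith
  qed
  have c2: "inner g p \<ge> j \<eta> p" using sub[OF zero_K] by (simp add: j_zero)
  have c3: "norm (w - p) \<le> lm * L"
  proof -
    have "inner (p - w) (w - p) + lm * j \<eta> w - lm * j \<eta> p \<ge> 0" using pv[OF w] .
    hence "(norm (w - p))\<^sup>2 \<le> lm * (j \<eta> w - j \<eta> p)"
      by (simp add: power2_norm_eq_inner inner_diff_left inner_diff_right inner_commute algebra_simps)
    also have "\<dots> \<le> lm * (L * norm (w - p))"
    proof -
      have "\<bar>j \<eta> w - j \<eta> p\<bar> \<le> L * norm (w - p)" using lipschitz_onD[OF L w pK] by (simp add: dist_norm dist_real_def)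
      thus ?thesis using lam by (intro mult_left_mono) auto
    qed
    finally have "norm (w - p) * norm (w - p) \<le> (lm * L) * norm (w - p)" by (simp add: power2_eq_square mult.assoc)
    thus ?thesis using lam L0 by (cases "norm (w - p) = 0") (auto simp: mult_le_cancel_right)
  qed
  have "inner g w = inner g p + inner g (w - p)" by (simp add: inner_diff_right)
  also have "inner g (w - p) = (norm (w - p))\<^sup>2 / lm" by (simp add: g_def power2_norm_eq_inner)
  finally have "inner g w \<ge> inner g p" using lam by simp
  moreover have "j \<eta> w - j \<eta> p \<le> L * norm (w - p)"
    using lipschitz_onD[OF L w pK] by (simp add: dist_norm dist_real_def abs_le_iff)
  moreover have "L * norm (w - p) \<le> L * (lm * L)" using c3 L0 by (rule mult_left_mono)
  ultimately have gw: "inner g w \<ge> j \<eta> w - \<epsilon>" using c2 lamL by (simp add: algebra_simps) 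
  have "g \<in> Cset K j \<eta>" unfolding Cset_def Jfun_def using c1 by auto
  with gw show ?thesis by blast
qed

lemma nc_of_vi:
  assumes "vi \<eta> (F0 - b) w"
  shows "- w \<in> normal_cone {F0 - \<xi> | \<xi>. \<xi> \<in> Cset K j \<eta>} (A w + b)"
proof -
  define \<xi>0 where "\<xi>0 = F0 - (A w + b)"
  have wK: "w \<in> K" using assms unfolding vi_def by blast
  have ineq: "inner \<xi>0 (v - w) \<le> j \<eta> v - j \<eta> w" if "v \<in> K" for v
    using assms that unfolding vi_def \<xi>0_def by (auto simp: inner_diff_left inner_minus_left algebra_simps)
  have "inner \<xi>0 w \<ge> j \<eta> w" using ineq[OF zero_K] by (simp add: j_zero)
  moreover have "inner \<xi>0 w \<le> j \<eta> w"
  proof -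
    have "inner \<xi>0 ((2::real) *\<^sub>R w - w) \<le> j \<eta> ((2::real) *\<^sub>R w) - j \<eta> w" by (rule ineq[OF scale_K[OF wK]]) simp
    thus ?thesis using j_hom[of 2 w \<eta>] wK by (simp add: algebra_simps)
  qed
  ultimately have eq: "inner \<xi>0 w = j \<eta> w" by simp
  have C: "\<xi>0 \<in> Cset K j \<eta>"
    unfolding Cset_def Jfun_def
  proof (intro CollectI allI)
    fix v show "ereal (inner \<xi>0 v) \<le> (if v \<in> K then ereal (j \<eta> v) else \<infinity>)"
      using ineq[of v] eq by (auto simp: inner_diff_right)
  qed
  have mem: "A w + b \<in> {F0 - \<xi> | \<xi>. \<xi> \<in> Cset K j \<eta>}" using C by (auto simp: \<xi>0_def intro!: exI[of _ \<xi>0])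
  show ?thesis unfolding normal_cone_def
  proof (simp only: mem if_True, intro CollectI ballI)
    fix d assume "d \<in> {F0 - \<xi> | \<xi>. \<xi> \<in> Cset K j \<eta>}"
    then obtain \<xi> where \<xi>: "\<xi> \<in> Cset K j \<eta>" "d = F0 - \<xi>" by blast
    have "ereal (inner \<xi> w) \<le> Jfun K j \<eta> w" using \<xi>(1) unfolding Cset_def by blast
    hence "inner \<xi> w \<le> j \<eta> w" using wK by (simp add: Jfun_def)
    moreover have "d - (A w + b) = \<xi>0 - \<xi>" by (simp add: \<xi>(2) \<xi>0_def)
    ultimately show "inner (- w) (d - (A w + b)) \<le> 0" using eq by (simp add: inner_diff_right inner_commute)
  qed
qed

lemma vi_of_nc:
  assumes wK: "w \<in> K" and nc: "- w \<in> normal_cone {F0 - \<xi> | \<xi>. \<xi> \<in> Cset K j \<eta>} (A w + b)"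
  shows "vi \<eta> (F0 - b) w"
proof -
  let ?D = "{F0 - \<xi> | \<xi>. \<xi> \<in> Cset K j \<eta>}"
  have mem: "A w + b \<in> ?D" using nc unfolding normal_cone_def by (auto split: if_splits)
  then obtain \<xi>0 where \<xi>0: "\<xi>0 \<in> Cset K j \<eta>" "A w + b = F0 - \<xi>0" by blast
  have nc2: "inner (- w) (d - (A w + b)) \<le> 0" if "d \<in> ?D" for d
    using nc mem that unfolding normal_cone_def by auto
  have max: "inner \<xi> w \<le> inner \<xi>0 w" if "\<xi> \<in> Cset K j \<eta>" for \<xi>
  proof -
    have "inner (- w) ((F0 - \<xi>) - (A w + b)) \<le> 0" using nc2 that by blast
    thus ?thesis unfolding \<xi>0(2) by (simp add: inner_diff_right inner_commute)
  qed
  have lower: "inner \<xi>0 v \<le> j \<eta> v" if "v \<in> K" for v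
  proof -
    have "ereal (inner \<xi>0 v) \<le> Jfun K j \<eta> v" using \<xi>0(1) unfolding Cset_def by blast
    thus ?thesis using that by (simp add: Jfun_def)
  qed
  have upper: "inner \<xi>0 w \<ge> j \<eta> w"
  proof (rule field_le_epsilon[where x = "j \<eta> w"])
    fix e :: real assume "e > 0"
    then obtain \<xi> where "\<xi> \<in> Cset K j \<eta>" "inner \<xi> w \<ge> j \<eta> w - e" using eps_sub[OF wK] by blast
    with max show "j \<eta> w \<le> inner \<xi>0 w + e" by fastforce
  qed
  have "A w - (F0 - b) = - \<xi>0" using \<xi>0(2) by (simp add: algebra_simps)
  hence "0 \<le> inner (A w - (F0 - b)) (v - w) + j \<eta> v - j \<eta> w" if "v \<in> K" for v
    using lower[OF that] upper by (simp add: inner_diff_right)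
  thus ?thesis unfolding vi_def using wK by blast
qed

end



lemma hd_bound:
  fixes P :: "(real \<Rightarrow> 'a::real_normed_vector) \<Rightarrow> (real \<Rightarrow> 'b::real_normed_vector)"
  assumes P: "history_dependent I P" and J: "compact J" "J \<subseteq> I"
  obtains L where "L > 0" "\<And>(w1::real \<Rightarrow> 'a) w2 t. continuous_on I w1 \<Longrightarrow> continuous_on I w2 \<Longrightarrow> t \<in> J \<Longrightarrow>
           norm (P w1 t - P w2 t) \<le> L * integral {0..t} (\<lambda>s. norm (w1 s - w2 s))"
proof -
  have "\<forall>J. compact J \<and> J \<subseteq> I \<longrightarrow>
        (\<exists>L>0. \<forall>u1 u2. continuous_on I u1 \<and> continuous_on I u2 \<longrightarrow>
           (\<forall>t\<in>J. norm (P u1 t - P u2 t) \<le> L * integral {0..t} (\<lambda>s. norm (u1 s - u2 s))))"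
    using P unfolding history_dependent_def by (rule conjunct2)
  hence "\<exists>L>0. \<forall>u1 u2. continuous_on I u1 \<and> continuous_on I u2 \<longrightarrow>
           (\<forall>t\<in>J. norm (P u1 t - P u2 t) \<le> L * integral {0..t} (\<lambda>s. norm (u1 s - u2 s)))"
    using J by simp
  then obtain L where L: "L > 0" "\<forall>u1 u2. continuous_on I u1 \<and> continuous_on I u2 \<longrightarrow>
           (\<forall>t\<in>J. norm (P u1 t - P u2 t) \<le> L * integral {0..t} (\<lambda>s. norm (u1 s - u2 s)))" by blast
  show ?thesis
  proof (rule that[OF L(1)])
    fix w1 w2 :: "real \<Rightarrow> 'a" and t assume "continuous_on I w1" "continuous_on I w2" "t \<in> J"
    thus "norm (P w1 t - P w2 t) \<le> L * integral {0..t} (\<lambda>s. norm (w1 s - w2 s))" using L(2) by blast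
  qed
qed

lemma hd_causal:
  fixes P :: "(real \<Rightarrow> 'a::real_normed_vector) \<Rightarrow> (real \<Rightarrow> 'b::real_normed_vector)"
  assumes P: "history_dependent I P" and c: "continuous_on I w1" "continuous_on I w2"
    and t: "t \<in> I" and eq: "\<And>s. s \<in> {0..t} \<Longrightarrow> w1 s = w2 s"
  shows "P w1 t = P w2 t"
proof -
  obtain L where L0: "L > 0" and L: "\<And>(w1::real \<Rightarrow> 'a) w2 t'. continuous_on I w1 \<Longrightarrow> continuous_on I w2 \<Longrightarrow> t' \<in> {t} \<Longrightarrow>
           norm (P w1 t' - P w2 t') \<le> L * integral {0..t'} (\<lambda>s. norm (w1 s - w2 s))"
    by (rule hd_bound[OF P, of "{t}"]) (use t in auto)
  have "integral {0..t} (\<lambda>s. norm (w1 s - w2 s)) = integral {0..t} (\<lambda>s. 0::real)"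
    by (rule integral_cong) (simp add: eq)
  hence "integral {0..t} (\<lambda>s. norm (w1 s - w2 s)) = 0" by simp
  with L[OF c, of t] have "norm (P w1 t - P w2 t) \<le> 0" by simp
  thus ?thesis by simp
qed

locale dyn = static K A mA LA j \<alpha>j for K :: "'x::{real_inner,complete_space} set"
    and A mA LA and j :: "'y::{real_inner,complete_space} \<Rightarrow> 'x \<Rightarrow> real" and \<alpha>j +
  fixes I :: "real set" and T :: real and f :: "real \<Rightarrow> 'x" and B :: "'x \<Rightarrow> 'x" and u0 :: 'x
    and R :: "(real \<Rightarrow> 'x) \<Rightarrow> (real \<Rightarrow> 'y)" and S :: "(real \<Rightarrow> 'x) \<Rightarrow> (real \<Rightarrow> 'x)"
  assumes I: "(T > 0 \<and> I = {0..T}) \<or> I = {0..}"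
    and f: "continuous_on I f"
    and B: "\<exists>L. L-lipschitz_on UNIV B"
    and R: "history_dependent I R"
    and S: "history_dependent I S"
begin

lemma I_sub: "t \<in> I \<Longrightarrow> {0..t} \<subseteq> I" using I by auto
lemma I_0: "0 \<in> I" using I by auto
lemma I_nonneg: "t \<in> I \<Longrightarrow> 0 \<le> t" using I by auto

definition U :: "(real \<Rightarrow> 'x) \<Rightarrow> real \<Rightarrow> 'x" where
  "U w t = u0 + intx {0..t} w"

lemma U_deriv:
  assumes w: "continuous_on I w" and t: "t \<in> I"
  shows "(U w has_vector_derivative w t) (at t within I)"
proof -
  have d: "((\<lambda>u. u0 + intx {0..u} w) has_vector_derivative w t) (at t within {0..b})"
    if "t \<in> {0..b}" "{0..b} \<subseteq> I" for b
  proof -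
    have "continuous_on {0..b} w" using w that(2) by (rule continuous_on_subset)
    from intx_deriv[OF this that(1)] show ?thesis
      by (intro derivative_eq_intros) auto
  qed
  show ?thesis using I
  proof
    assume "T > 0 \<and> I = {0..T}"
    thus ?thesis using d[of T] t unfolding U_def by auto
  next
    assume I0: "I = {0..}"
    have "at t within I = at t within {0..t+1}"
      by (rule at_within_nhd[of _ "{..<t+1}"]) (auto simp: I0)
    moreover have "((\<lambda>u. u0 + intx {0..u} w) has_vector_derivative w t) (at t within {0..t+1})"
      using t I0 by (intro d) auto
    ultimately show ?thesis unfolding U_def by simp
  qed
qed

lemma U_cont: "continuous_on I w \<Longrightarrow> continuous_on I (U w)"
  using U_deriv has_vector_derivative_continuous continuous_on_eq_continuous_within by blast

lemma U_0: "U w 0 = u0" by (simp add: U_def intx_singleton)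

lemma U_diff:
  assumes "continuous_on I w1" "continuous_on I w2" "t \<in> I"
  shows "norm (U w1 t - U w2 t) \<le> integral {0..t} (\<lambda>s. norm (w1 s - w2 s))"
proof -
  have c: "continuous_on {0..t} w1" "continuous_on {0..t} w2"
    using assms I_sub continuous_on_subset by blast+
  have "U w1 t - U w2 t = intx {0..t} (\<lambda>s. w1 s - w2 s)" unfolding U_def using intx_diff[OF c] by simp
  also have "norm \<dots> \<le> integral {0..t} (\<lambda>s. norm (w1 s - w2 s))"
    by (rule intx_norm) (intro continuous_intros c)
  finally show ?thesis .
qed

lemma U_causal:
  assumes "\<And>s. s \<in> {0..t} \<Longrightarrow> w1 s = w2 s"
  shows "U w1 t = U w2 t"
  unfolding U_def using intx_cong[of "{0..t}" w1 w2] assms by simp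

definition Lam :: "(real \<Rightarrow> 'x) \<Rightarrow> real \<Rightarrow> 'x" where
  "Lam w t = Sol (R w t) (f t - B (U w t) - S w t)"

lemma B_cont: "continuous_on X B"
proof -
  obtain L where "L-lipschitz_on UNIV B" using B by blast
  hence "continuous_on UNIV B" by (rule lipschitz_on_continuous_on)
  thus ?thesis using continuous_on_subset by blast
qed

lemma Lam_cont:
  assumes w: "continuous_on I w"
  shows "continuous_on I (Lam w)"
proof -
  have cR: "continuous_on I (R w)" using R w unfolding history_dependent_def by blast
  have cS: "continuous_on I (S w)" using S w unfolding history_dependent_def by blast
  have cB: "continuous_on I (\<lambda>t. B (U w t))"
    using continuous_on_compose2[OF B_cont U_cont[OF w], of UNIV] by simp
  have "continuous_on I (\<lambda>t. f t - B (U w t) - S w t)"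
    by (intro continuous_intros f cB cS)
  from Sol_cont[OF cR this] show ?thesis unfolding Lam_def .
qed

lemma Lam_causal:
  assumes c: "continuous_on I w1" "continuous_on I w2" and t: "t \<in> I"
    and eq: "\<And>s. s \<in> {0..t} \<Longrightarrow> w1 s = w2 s"
  shows "Lam w1 t = Lam w2 t"
proof -
  have "R w1 t = R w2 t" by (rule hd_causal[OF R c t eq])
  moreover have "S w1 t = S w2 t" by (rule hd_causal[OF S c t eq])
  moreover have "U w1 t = U w2 t" by (rule U_causal[OF eq])
  moreover have "w1 t = w2 t" using eq t I_nonneg by auto
  ultimately show ?thesis unfolding Lam_def by simp
qed

lemma Lam_est:
  assumes J: "{0..T'} \<subseteq> I"
  shows "\<exists>M\<ge>0. \<forall>w1 w2. continuous_on I w1 \<and> continuous_on I w2 \<longrightarrow>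
     (\<forall>t\<in>{0..T'}. norm (Lam w1 t - Lam w2 t) \<le> M * integral {0..t} (\<lambda>s. norm (w1 s - w2 s)))"
proof -
  obtain LR where LR: "LR > 0" "\<And>w1 w2 t. continuous_on I w1 \<Longrightarrow> continuous_on I w2 \<Longrightarrow> t \<in> {0..T'} \<Longrightarrow>
      norm (R w1 t - R w2 t) \<le> LR * integral {0..t} (\<lambda>s. norm (w1 s - w2 s))"
    using hd_bound[OF R compact_Icc J] by metis
  obtain LS where LS: "LS > 0" "\<And>w1 w2 t. continuous_on I w1 \<Longrightarrow> continuous_on I w2 \<Longrightarrow> t \<in> {0..T'} \<Longrightarrow>
      norm (S w1 t - S w2 t) \<le> LS * integral {0..t} (\<lambda>s. norm (w1 s - w2 s))"
    using hd_bound[OF S compact_Icc J] by metis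
  obtain LB where LB: "LB-lipschitz_on UNIV B" using B by blast
  have LB0: "LB \<ge> 0" using LB by (rule lipschitz_on_nonneg)
  define M where "M = (LB + LS + \<alpha>j * LR) / mA"
  have M0: "M \<ge> 0" unfolding M_def using LB0 LS LR j_alpha(1) A(1) by simp
  show ?thesis
  proof (intro exI[of _ M] conjI M0 allI impI ballI)
    fix w1 w2 :: "real \<Rightarrow> 'x" and t assume c: "continuous_on I w1 \<and> continuous_on I w2" and t: "t \<in> {0..T'}"
    have tI: "t \<in> I" using t J by auto
    define Iv where "Iv = integral {0..t} (\<lambda>s. norm (w1 s - w2 s))"
    have Iv0: "Iv \<ge> 0" unfolding Iv_def by (rule integral_nonneg) (use c I_sub[OF tI] in
       \<open>auto intro!: integrable_continuous_interval continuous_intros intro: continuous_on_subset\<close>)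
    have hU: "norm (U w1 t - U w2 t) \<le> Iv" unfolding Iv_def using U_diff c tI by blast
    have hB: "norm (B (U w1 t) - B (U w2 t)) \<le> LB * Iv"
    proof -
      have "norm (B (U w1 t) - B (U w2 t)) \<le> LB * norm (U w1 t - U w2 t)"
        using lipschitz_onD[OF LB, of "U w1 t" "U w2 t"] by (simp add: dist_norm)
      also have "\<dots> \<le> LB * Iv" using hU LB0 by (rule mult_left_mono)
      finally show ?thesis .
    qed
    have hS: "norm (S w1 t - S w2 t) \<le> LS * Iv" unfolding Iv_def using LS(2) c t by blast
    have hR: "norm (R w1 t - R w2 t) \<le> LR * Iv" unfolding Iv_def using LR(2) c t by blast
    have "mA * norm (Lam w1 t - Lam w2 t) \<le>
       norm ((f t - B (U w1 t) - S w1 t) - (f t - B (U w2 t) - S w2 t)) + \<alpha>j * norm (R w1 t - R w2 t)"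
      unfolding Lam_def by (rule Sol_lip)
    also have "norm ((f t - B (U w1 t) - S w1 t) - (f t - B (U w2 t) - S w2 t))
        \<le> norm (B (U w1 t) - B (U w2 t)) + norm (S w1 t - S w2 t)"
    proof -
      have "(f t - B (U w1 t) - S w1 t) - (f t - B (U w2 t) - S w2 t) = - ((B (U w1 t) - B (U w2 t)) + (S w1 t - S w2 t))"
        by (simp add: algebra_simps)
      thus ?thesis by (metis norm_minus_cancel norm_triangle_ineq)
    qed
    also have "\<alpha>j * norm (R w1 t - R w2 t) \<le> \<alpha>j * (LR * Iv)" using hR j_alpha(1) by (rule mult_left_mono)
    finally have "mA * norm (Lam w1 t - Lam w2 t) \<le> LB * Iv + LS * Iv + \<alpha>j * (LR * Iv)"
      using hB hS by linarith
    also have "\<dots> = mA * (M * Iv)" unfolding M_def using A(1) by (simp add: field_simps)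
    finally show "norm (Lam w1 t - Lam w2 t) \<le> M * Iv" using A(1) by simp
  qed
qed

end



context dyn begin

lemma exp_int_bound:
  fixes \<beta> s :: real
  assumes b: "\<beta> > 0" and s: "0 \<le> s"
  shows "integral {0..s} (\<lambda>r. exp (\<beta> * r)) \<le> exp (\<beta> * s) / \<beta>"
proof -
  have "((\<lambda>r. exp (\<beta> * r)) has_integral (exp (\<beta> * s) / \<beta> - exp (\<beta> * 0) / \<beta>)) {0..s}"
  proof (rule fundamental_theorem_of_calculus[OF s])
    fix x :: real
    have "((\<lambda>r. exp (\<beta> * r) / \<beta>) has_real_derivative exp (\<beta> * x)) (at x within {0..s})"
      using b by (auto intro!: derivative_eq_intros)
    thus "((\<lambda>r. exp (\<beta> * r) / \<beta>) has_vector_derivative exp (\<beta> * x)) (at x within {0..s})"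
      by (simp add: has_real_derivative_iff_has_vector_derivative)
  qed
  hence "integral {0..s} (\<lambda>r. exp (\<beta> * r)) = exp (\<beta> * s) / \<beta> - 1 / \<beta>" by (simp add: integral_unique)
  thus ?thesis using b by simp
qed

lemma local_fix:
  assumes T': "0 \<le> T'" "{0..T'} \<subseteq> I"
  shows "\<exists>w. continuous_on I w \<and> (\<forall>t\<in>{0..T'}. w t = Lam w t)"
    and "\<And>w1 w2. continuous_on I w1 \<Longrightarrow> continuous_on I w2 \<Longrightarrow> (\<forall>t\<in>{0..T'}. w1 t = Lam w1 t) \<Longrightarrow>
           (\<forall>t\<in>{0..T'}. w2 t = Lam w2 t) \<Longrightarrow> (\<forall>t\<in>{0..T'}. w1 t = w2 t)"
proof -
  obtain M where M: "M \<ge> 0" and est: "\<And>w1 w2 t. continuous_on I w1 \<Longrightarrow> continuous_on I w2 \<Longrightarrow> t \<in> {0..T'} \<Longrightarrow>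
     norm (Lam w1 t - Lam w2 t) \<le> M * integral {0..t} (\<lambda>s. norm (w1 s - w2 s))"
    using Lam_est[OF T'(2)] by blast
  define \<beta> where "\<beta> = 2 * M + 2"
  have \<beta>: "\<beta> > 0" using M by (simp add: \<beta>_def)
  have M\<beta>: "M / \<beta> \<le> 1 / 2" using M \<beta> by (simp add: \<beta>_def field_simps)
  define c where "c x = clamp 0 T' x" for x :: real
  have c_in: "c x \<in> {0..T'}" for x
  proof -
    have "clamp 0 T' x \<in> cbox 0 T'" by (rule clamp_in_interval) (use T'(1) in simp)
    thus ?thesis by (simp add: c_def)
  qed
  have c_id: "x \<in> {0..T'} \<Longrightarrow> c x = x" for x unfolding c_def by (rule clamp_cancel_cbox) simp
  define Eb where "Eb h = (SOME G. \<forall>x. apply_bcontfun G x = exp (- \<beta> * c x) *\<^sub>R h (c x))" for h :: "real \<Rightarrow> 'x hw"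
  have Eb: "apply_bcontfun (Eb h) x = exp (- \<beta> * c x) *\<^sub>R h (c x)" if h: "continuous_on {0..T'} h" for h x
  proof -
    have "continuous_on (cbox 0 T') (\<lambda>t. exp (- \<beta> * t) *\<^sub>R h t)" using h by (auto intro!: continuous_intros)
    then obtain G :: "real \<Rightarrow>\<^sub>C 'x hw" where "\<And>x. G x = exp (- \<beta> * clamp 0 T' x) *\<^sub>R h (clamp 0 T' x)"
      by (rule continuous_on_cbox_bcontfunE) auto
    hence "\<exists>G :: real \<Rightarrow>\<^sub>C 'x hw. \<forall>x. apply_bcontfun G x = exp (- \<beta> * c x) *\<^sub>R h (c x)" unfolding c_def by blast
    from someI_ex[OF this] show ?thesis unfolding Eb_def by blast
  qed
  define D where "D F t = rp (exp (\<beta> * t) *\<^sub>R apply_bcontfun F t)" for F :: "real \<Rightarrow>\<^sub>C 'x hw" and t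
  have D_cont: "continuous_on X (D F)" for X F
    unfolding D_def by (intro bounded_linear.continuous_on[OF bl_rp] continuous_intros) auto
  define W where "W w t = ab (w t)" for w :: "real \<Rightarrow> 'x" and t
  have W_cont: "continuous_on X w \<Longrightarrow> continuous_on X (W w)" for X w unfolding W_def by (rule cont_ab)
  define \<Phi> where "\<Phi> F = Eb (W (Lam (D F)))" for F
  have LD_cont: "continuous_on {0..T'} (W (Lam (D F)))" for F
    by (rule W_cont, rule continuous_on_subset[OF Lam_cont[OF D_cont] T'(2)])
  have \<Phi>_app: "apply_bcontfun (\<Phi> F) x = exp (- \<beta> * c x) *\<^sub>R ab (Lam (D F) (c x))" for F x
    unfolding \<Phi>_def using Eb[OF LD_cont] by (simp add: W_def)
  have contr: "dist (\<Phi> F) (\<Phi> G) \<le> 1/2 * dist F G" for F G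
  proof (rule dist_bound)
    fix x
    define s where "s = c x"
    have s: "s \<in> {0..T'}" unfolding s_def by (rule c_in)
    have "dist (\<Phi> F x) (\<Phi> G x) = exp (- \<beta> * s) * norm (Lam (D F) s - Lam (D G) s)"
      unfolding \<Phi>_app dist_norm s_def[symmetric] by (simp flip: scaleR_diff_right ab_diff)
    also have "norm (Lam (D F) s - Lam (D G) s) \<le> M * integral {0..s} (\<lambda>r. norm (D F r - D G r))"
      by (rule est[OF D_cont D_cont s])
    also have "integral {0..s} (\<lambda>r. norm (D F r - D G r)) \<le> integral {0..s} (\<lambda>r. exp (\<beta> * r) * dist F G)"
    proof (rule integral_le)
      show "(\<lambda>r. norm (D F r - D G r)) integrable_on {0..s}"
        by (intro integrable_continuous_interval continuous_intros D_cont)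
      show "(\<lambda>r. exp (\<beta> * r) * dist F G) integrable_on {0..s}"
        by (intro integrable_continuous_interval continuous_intros)
      fix r assume "r \<in> {0..s}"
      have "norm (D F r - D G r) = exp (\<beta> * r) * norm (F r - G r)"
        unfolding D_def by (simp flip: rp_diff scaleR_diff_right)
      also have "\<dots> \<le> exp (\<beta> * r) * dist F G"
        using dist_bounded[of F r G] by (simp add: dist_norm)
      finally show "norm (D F r - D G r) \<le> exp (\<beta> * r) * dist F G" .
    qed
    also have "integral {0..s} (\<lambda>r. exp (\<beta> * r) * dist F G) = integral {0..s} (\<lambda>r. exp (\<beta> * r)) * dist F G"
      by (rule integral_mult_left)
    also have "\<dots> \<le> exp (\<beta> * s) / \<beta> * dist F G"
      using exp_int_bound[OF \<beta>, of s] s by (intro mult_right_mono) auto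
    finally have "dist (\<Phi> F x) (\<Phi> G x) \<le> exp (- \<beta> * s) * (M * (exp (\<beta> * s) / \<beta> * dist F G))"
      using M by (simp add: mult_left_mono)
    also have "\<dots> = M / \<beta> * dist F G" by (simp add: exp_minus field_simps)
    also have "\<dots> \<le> 1/2 * dist F G" using M\<beta> by (intro mult_right_mono) auto
    finally show "dist (\<Phi> F x) (\<Phi> G x) \<le> 1/2 * dist F G" .
  qed
  have ex1: "\<exists>!F. \<Phi> F = F" by (rule banach_fix_type[of "1/2"]) (use contr in auto)
  then obtain F where F: "\<Phi> F = F" by blast
  show "\<exists>w. continuous_on I w \<and> (\<forall>t\<in>{0..T'}. w t = Lam w t)"
  proof (intro exI[of _ "D F"] conjI ballI D_cont)
    fix t assume t: "t \<in> {0..T'}"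
    have "D F t = rp (exp (\<beta> * t) *\<^sub>R apply_bcontfun (\<Phi> F) t)" unfolding D_def F ..
    also have "\<dots> = Lam (D F) t" unfolding \<Phi>_app c_id[OF t] by (simp add: exp_minus field_simps)
    finally show "D F t = Lam (D F) t" .
  qed
  have fixE: "\<Phi> (Eb (W w)) = Eb (W w)" if w: "continuous_on I w" "\<forall>t\<in>{0..T'}. w t = Lam w t" for w
  proof (rule bcontfun_eqI)
    fix x
    have wc: "continuous_on {0..T'} (W w)" using w(1) T'(2) by (intro W_cont) (rule continuous_on_subset)
    have DE: "D (Eb (W w)) r = w r" if r: "r \<in> {0..T'}" for r
      unfolding D_def Eb[OF wc] c_id[OF r] by (simp add: W_def exp_minus field_simps)
    have "Lam (D (Eb (W w))) (c x) = Lam w (c x)"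
      by (rule Lam_causal[OF D_cont w(1)]) (use c_in[of x] T'(2) DE in auto)
    also have "\<dots> = w (c x)" using w(2) c_in by metis
    finally show "apply_bcontfun (\<Phi> (Eb (W w))) x = apply_bcontfun (Eb (W w)) x"
      unfolding \<Phi>_app Eb[OF wc] by (simp add: W_def)
  qed
  fix w1 w2 assume w1: "continuous_on I w1" and w2: "continuous_on I w2"
    and f1: "\<forall>t\<in>{0..T'}. w1 t = Lam w1 t" and f2: "\<forall>t\<in>{0..T'}. w2 t = Lam w2 t"
  have "Eb (W w1) = Eb (W w2)" using ex1 fixE[OF w1 f1] fixE[OF w2 f2] by metis
  show "\<forall>t\<in>{0..T'}. w1 t = w2 t"
  proof
    fix t assume t: "t \<in> {0..T'}"
    have wc: "continuous_on {0..T'} (W w1)" "continuous_on {0..T'} (W w2)"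
      using w1 w2 T'(2) by (auto intro!: W_cont intro: continuous_on_subset)
    have "apply_bcontfun (Eb (W w1)) t = apply_bcontfun (Eb (W w2)) t" using \<open>Eb (W w1) = Eb (W w2)\<close> by simp
    hence "exp (- \<beta> * t) *\<^sub>R ab (w1 t) = exp (- \<beta> * t) *\<^sub>R ab (w2 t)"
      unfolding Eb[OF wc(1)] Eb[OF wc(2)] c_id[OF t] W_def .
    hence "ab (w1 t) = ab (w2 t)" by simp
    thus "w1 t = w2 t" using ab_inject[of "w1 t" "w2 t"] by simp
  qed
qed

end



context dyn begin

lemma global_fix: "\<exists>w. continuous_on I w \<and> (\<forall>t\<in>I. w t = Lam w t)"
  using I
proof
  assume "T > 0 \<and> I = {0..T}"
  thus ?thesis using local_fix(1)[of T] by auto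
next
  assume I0: "I = {0..}"
  have "\<forall>n::nat. \<exists>w. continuous_on I w \<and> (\<forall>t\<in>{0..real n}. w t = Lam w t)"
    using local_fix(1) I0 by auto
  then obtain W where W: "\<And>n. continuous_on I (W n)" "\<And>n t. t \<in> {0..real n} \<Longrightarrow> W n t = Lam (W n) t"
    by metis
  define w where "w t = W (nat \<lceil>t\<rceil>) t" for t
  have agree: "w t = W N t" if t: "t \<in> {0..real N}" for t N
  proof -
    define n where "n = nat \<lceil>t\<rceil>"
    have tn: "t \<in> {0..real n}" using t unfolding n_def by (auto; linarith)
    have "n \<le> N" using t by (simp add: n_def nat_le_iff ceiling_le_iff)
    hence nN: "real n \<le> real N" by simp
    have "\<forall>s\<in>{0..real n}. W n s = W N s"
    proof (rule local_fix(2)[OF _ _ W(1) W(1)])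
      show "0 \<le> real n" by simp
      show "{0..real n} \<subseteq> I" using I0 by auto
      show "\<forall>s\<in>{0..real n}. W n s = Lam (W n) s" using W(2) by blast
      show "\<forall>s\<in>{0..real n}. W N s = Lam (W N) s" using W(2) nN by auto
    qed
    with tn show ?thesis unfolding w_def n_def by auto
  qed
  have wc: "continuous_on I w"
    unfolding continuous_on_eq_continuous_within
  proof
    fix t assume t: "t \<in> I"
    define N where "N = nat \<lceil>t\<rceil> + 1"
    have tN: "t < real N" unfolding N_def by linarith
    have c1: "continuous_on {0..real N} (W N)" by (rule continuous_on_subset[OF W(1)]) (use I0 in auto)
    have "continuous_on {0..real N} w"
    proof (rule continuous_on_eq[OF c1])
      fix x assume "x \<in> {0..real N}"
      thus "W N x = w x" by (rule agree[symmetric])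
    qed
    moreover have tm: "t \<in> {0..real N}" using t tN I0 by simp
    ultimately have "continuous (at t within {0..real N}) w" unfolding continuous_on_eq_continuous_within by blast
    moreover have "at t within I = at t within {0..real N}"
      by (rule at_within_nhd[of _ "{..<real N}"]) (use tN I0 in auto)
    ultimately show "continuous (at t within I) w" by simp
  qed
  have "w t = Lam w t" if t: "t \<in> I" for t
  proof -
    define N where "N = nat \<lceil>t\<rceil>"
    have tN: "t \<in> {0..real N}" using t I0 unfolding N_def by (auto; linarith)
    have "w t = W N t" by (rule agree[OF tN])
    also have "\<dots> = Lam (W N) t" by (rule W(2)[OF tN])
    also have "\<dots> = Lam w t"
    proof (rule Lam_causal[OF W(1) wc t])
      fix s assume "s \<in> {0..t}"
      hence "s \<in> {0..real N}" using tN by auto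
      thus "W N s = w s" by (rule agree[symmetric])
    qed
    finally show ?thesis .
  qed
  with wc show ?thesis by blast
qed

theorem main:
  shows "\<exists>u u'. (\<forall>t\<in>I. (u has_vector_derivative u' t) (at t within I)) \<and>
           continuous_on I u' \<and> (\<forall>t\<in>I. u' t \<in> K) \<and>
           (\<forall>t\<in>I. - u' t \<in> normal_cone (Cset_t K j f (R u' t) t) (A (u' t) + B (u t) + S u' t)) \<and>
           u 0 = u0 \<and>
           (\<forall>v v'. (\<forall>t\<in>I. (v has_vector_derivative v' t) (at t within I)) \<and>
              continuous_on I v' \<and> (\<forall>t\<in>I. v' t \<in> K) \<and>
              (\<forall>t\<in>I. - v' t \<in> normal_cone (Cset_t K j f (R v' t) t) (A (v' t) + B (v t) + S v' t)) \<and>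
              v 0 = u0 \<longrightarrow> (\<forall>t\<in>I. v t = u t))"
proof -
  obtain w where wc: "continuous_on I w" and wf: "\<And>t. t \<in> I \<Longrightarrow> w t = Lam w t" using global_fix by blast
  have Cset_eq: "Cset_t K j f \<eta> t = {f t - \<xi> | \<xi>. \<xi> \<in> Cset K j \<eta>}" for \<eta> t by (simp add: Cset_t_def)
  have P1: "\<forall>t\<in>I. (U w has_vector_derivative w t) (at t within I)" using U_deriv[OF wc] by blast
  have P2: "\<forall>t\<in>I. w t \<in> K" using wf Sol_K unfolding Lam_def by metis
  have P3: "\<forall>t\<in>I. - w t \<in> normal_cone (Cset_t K j f (R w t) t) (A (w t) + B (U w t) + S w t)"
  proof
    fix t assume t: "t \<in> I"
    have "vi (R w t) (f t - B (U w t) - S w t) (w t)" using wf[OF t] Sol unfolding Lam_def by metis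
    hence "vi (R w t) (f t - (B (U w t) + S w t)) (w t)" by (simp add: algebra_simps)
    from nc_of_vi[OF this]
    show "- w t \<in> normal_cone (Cset_t K j f (R w t) t) (A (w t) + B (U w t) + S w t)"
      unfolding Cset_eq by (simp add: add.assoc)
  qed
  have P4: "\<forall>v v'. (\<forall>t\<in>I. (v has_vector_derivative v' t) (at t within I)) \<and>
              continuous_on I v' \<and> (\<forall>t\<in>I. v' t \<in> K) \<and>
              (\<forall>t\<in>I. - v' t \<in> normal_cone (Cset_t K j f (R v' t) t) (A (v' t) + B (v t) + S v' t)) \<and>
              v 0 = u0 \<longrightarrow> (\<forall>t\<in>I. v t = U w t)"
  proof (intro allI impI ballI)
    fix v v' t
    assume H: "(\<forall>t\<in>I. (v has_vector_derivative v' t) (at t within I)) \<and>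
              continuous_on I v' \<and> (\<forall>t\<in>I. v' t \<in> K) \<and>
              (\<forall>t\<in>I. - v' t \<in> normal_cone (Cset_t K j f (R v' t) t) (A (v' t) + B (v t) + S v' t)) \<and>
              v 0 = u0"
      and t: "t \<in> I"
    have vU: "v s = U v' s" if s: "s \<in> I" for s
    proof -
      have "intx {0..s} v' = v s - v 0"
      proof (rule intx_ftc)
        show "0 \<le> s" using s by (rule I_nonneg)
        fix x assume "x \<in> {0..s}"
        hence "x \<in> I" using I_sub[OF s] by auto
        with H have "(v has_vector_derivative v' x) (at x within I)" by blast
        thus "(v has_vector_derivative v' x) (at x within {0..s})"
          by (rule has_vector_derivative_within_subset) (rule I_sub[OF s])
      qed
      thus ?thesis using H unfolding U_def by (simp add: algebra_simps)
    qed
    have vf: "v' s = Lam v' s" if s: "s \<in> I" for s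
    proof -
      have "- v' s \<in> normal_cone {f s - \<xi> | \<xi>. \<xi> \<in> Cset K j (R v' s)} (A (v' s) + (B (v s) + S v' s))"
        using H s unfolding Cset_eq by (simp add: add.assoc)
      from vi_of_nc[OF _ this] H s
      have "vi (R v' s) (f s - (B (v s) + S v' s)) (v' s)" by blast
      hence "v' s = Sol (R v' s) (f s - (B (v s) + S v' s))" by (rule Sol_unique)
      thus ?thesis unfolding Lam_def vU[OF s] by (simp add: algebra_simps)
    qed
    have "\<forall>s\<in>{0..t}. v' s = w s"
    proof (rule local_fix(2))
      show "0 \<le> t" using t by (rule I_nonneg)
      show "{0..t} \<subseteq> I" using t by (rule I_sub)
      show "continuous_on I v'" using H by blast
      show "continuous_on I w" by (rule wc)
      show "\<forall>s\<in>{0..t}. v' s = Lam v' s" using vf I_sub[OF t] by auto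
      show "\<forall>s\<in>{0..t}. w s = Lam w s" using wf I_sub[OF t] by auto
    qed
    hence "U v' t = U w t" by (intro U_causal) auto
    thus "v t = U w t" using vU[OF t] by simp
  qed
  show ?thesis
    apply (rule exI[of _ "U w"])
    apply (rule exI[of _ w])
    using P1 P2 P3 P4 wc U_0 by blast
qed

end

theorem corollary4p1:
  fixes I :: "real set" and T :: real
    and K :: "'x::{real_inner,complete_space} set"
    and A B :: "'x \<Rightarrow> 'x" and mA LA :: real
    and j :: "'y::{real_inner,complete_space} \<Rightarrow> 'x \<Rightarrow> real" and \<alpha>j :: real
    and f :: "real \<Rightarrow> 'x" and u0 :: 'x
    and R :: "(real \<Rightarrow> 'x) \<Rightarrow> (real \<Rightarrow> 'y)"
    and S :: "(real \<Rightarrow> 'x) \<Rightarrow> (real \<Rightarrow> 'x)"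
  assumes I: "(T > 0 \<and> I = {0..T}) \<or> I = {0..}"
    and K: "K \<noteq> {}" "closed K" "convex K" "cone K"
    and A: "mA > 0" "LA > 0"
      "\<And>u v. inner (A u - A v) (u - v) \<ge> mA * (norm (u - v))\<^sup>2"
      "\<And>u v. norm (A u - A v) \<le> LA * norm (u - v)"
    and j_convex: "\<And>\<eta>. convex_on K (j \<eta>)"
    and j_hom: "\<And>\<eta> c v. c > 0 \<Longrightarrow> v \<in> K \<Longrightarrow> j \<eta> (c *\<^sub>R v) = c * j \<eta> v"
    and j_lip: "\<And>\<eta>. \<exists>L. L-lipschitz_on K (j \<eta>)"
    and j_alpha: "\<alpha>j \<ge> 0"
      "\<And>\<eta>1 \<eta>2 v1 v2. v1 \<in> K \<Longrightarrow> v2 \<in> K \<Longrightarrow>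
         j \<eta>1 v2 - j \<eta>1 v1 + j \<eta>2 v1 - j \<eta>2 v2 \<le> \<alpha>j * norm (\<eta>1 - \<eta>2) * norm (v1 - v2)"
    and f: "continuous_on I f"
    and B: "\<exists>L. L-lipschitz_on UNIV B"
    and R: "history_dependent I R"
    and S: "history_dependent I S"
  shows "\<exists>u u'. (\<forall>t\<in>I. (u has_vector_derivative u' t) (at t within I)) \<and>
           continuous_on I u' \<and> (\<forall>t\<in>I. u' t \<in> K) \<and>
           (\<forall>t\<in>I. - u' t \<in> normal_cone (Cset_t K j f (R u' t) t) (A (u' t) + B (u t) + S u' t)) \<and>
           u 0 = u0 \<and>
           (\<forall>v v'. (\<forall>t\<in>I. (v has_vector_derivative v' t) (at t within I)) \<and>
              continuous_on I v' \<and> (\<forall>t\<in>I. v' t \<in> K) \<and>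
              (\<forall>t\<in>I. - v' t \<in> normal_cone (Cset_t K j f (R v' t) t) (A (v' t) + B (v t) + S v' t)) \<and>
              v 0 = u0 \<longrightarrow> (\<forall>t\<in>I. v t = u t))"
proof -
  interpret dyn K A mA LA j \<alpha>j I T f B u0 R S
    by unfold_locales (fact I K A j_convex j_hom j_lip j_alpha f B R S)+
  show ?thesis by (rule main)
qed

end
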